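(* Let $m\geq 1$ and for each $i\geq 1$ let $\Lambda_i=a_1^{(i)}\mathbb{Z}\times a_2^{(i)}\mathbb{Z}\times\dots\times a_m^{(i)}\mathbb{Z}$ with $(a_1^{(i)},\dots,a_m^{(i)})\in\mathbb{N}^m\setminus\{(1,\dots,1)\}$. Let $\eta=\mathbb{1}_{\mathbb{Z}^m\setminus\bigcup_{i\geq1}\Lambda_i}\in\{0,1\}^{\mathbb{Z}^m}$ and $X_\eta$ its orbit closure. Then $(X_\eta,(S_{\mathbf{n}})_{\mathbf{n}\in\mathbb{Z}^m})$ is proximal if and only if $\{\Lambda_i\}_{i\geq1}$ contains an infinite subset of pairwise coprime lattices.
   Context: The shift on $\{0,1\}^{\mathbb{Z}^m}$ is $(S_{\mathbf{n}}x)_{\mathbf{g}}=x_{\mathbf{g}+\mathbf{n}}$; $X_\eta$ is the closure (product topology) of $\{S_{\mathbf{n}}\eta\}$. A system is proximal if every pair $(x,y)$ of its points satisfies $\liminf_{\mathbf{n}\to\infty}D(S_{\mathbf{n}}x,S_{\mathbf{n}}y)=0$ for a compatible metric $D$. Two proper subgroups $\Lambda,\Lambda'$ of $\mathbb{Z}^m$ are coprime if $\Lambda+\Lambda'=\mathbb{Z}^m$. *)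

theory Defs
  imports "HOL-Analysis.Analysis" "HOL-Library.Extended_Real"
begin

type_synonym ('m) config = "(int ^ 'm) \<Rightarrow> bool"

definition shift :: "int ^ 'm::finite \<Rightarrow> 'm config \<Rightarrow> 'm config" where
  "shift n x = (\<lambda>g. x (g + n))"

definition prod_top :: "'m::finite config topology" where
  "prod_top = product_topology (\<lambda>_. discrete_topology (UNIV :: bool set)) UNIV"

definition orbit_closure :: "'m::finite config \<Rightarrow> 'm config set" where
  "orbit_closure eta = prod_top closure_of (range (\<lambda>n. shift n eta))"

definition compatible_metric :: "'m::finite config set \<Rightarrow> ('m config \<Rightarrow> 'm config \<Rightarrow> real) \<Rightarrow> bool" where
  "compatible_metric X D \<longleftrightarrow>
     Metric_space X D \<and> Metric_space.mtopology X D = subtopology prod_top X"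

text \<open>Proximality: liminf over n \<rightarrow> \<infinity> in Z^m (cofinite filter) of D(S_n x, S_n y) is 0.\<close>
definition proximal :: "'m::finite config set \<Rightarrow> bool" where
  "proximal X \<longleftrightarrow> (\<exists>D. compatible_metric X D \<and>
     (\<forall>x\<in>X. \<forall>y\<in>X. Liminf cofinite (\<lambda>n. ereal (D (shift n x) (shift n y))) = 0))"

definition lattice_of :: "('m::finite \<Rightarrow> nat) \<Rightarrow> (int ^ 'm) set" where
  "lattice_of a = {v. \<forall>j. int (a j) dvd v $ j}"

definition coprime_lattices :: "(int ^ 'm::finite) set \<Rightarrow> (int ^ 'm) set \<Rightarrow> bool" where
  "coprime_lattices L L' \<longleftrightarrow> {x + y | x y. x \<in> L \<and> y \<in> L'} = UNIV"

end

theory Submission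
  imports Defs "HOL-Number_Theory.Cong"
begin

definition cyl :: "(int ^ 'm::finite) set \<Rightarrow> 'm config \<Rightarrow> 'm config set" where
  "cyl W p = {u. \<forall>g\<in>W. u g = p g}"

lemma topspace_prod_top [simp]: "topspace (prod_top :: 'm::finite config topology) = UNIV"
  unfolding prod_top_def by (simp add: topspace_product_topology)

lemma cyl_open:
  assumes "finite W" shows "openin (prod_top :: 'm::finite config topology) (cyl W p)"
  unfolding prod_top_def openin_product_topology_alt
proof (intro ballI)
  fix x assume x: "x \<in> cyl W p"
  define U where "U = (\<lambda>i. if i \<in> W then {p i} else (UNIV::bool set))"
  have "{i \<in> UNIV. U i \<noteq> topspace (discrete_topology UNIV)} \<subseteq> W" by (auto simp: U_def)
  hence "finite {i \<in> UNIV. U i \<noteq> topspace (discrete_topology UNIV)}" using assms finite_subset by blast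
  moreover have "x \<in> Pi\<^sub>E UNIV U" using x by (auto simp: U_def cyl_def)
  moreover have "Pi\<^sub>E UNIV U \<subseteq> cyl W p" by (auto simp: U_def cyl_def PiE_def Pi_def)
  ultimately show "\<exists>U. finite {i \<in> UNIV. U i \<noteq> topspace (discrete_topology UNIV)} \<and>
      (\<forall>i\<in>UNIV. openin (discrete_topology UNIV) (U i)) \<and> x \<in> Pi\<^sub>E UNIV U \<and> Pi\<^sub>E UNIV U \<subseteq> cyl W p"
    by auto
qed

lemma open_contains_cyl:
  assumes "openin (prod_top :: 'm::finite config topology) U" "p \<in> U"
  shows "\<exists>W. finite W \<and> cyl W p \<subseteq> U"
proof -
  obtain V where V: "finite {i \<in> UNIV. V i \<noteq> topspace (discrete_topology (UNIV::bool set))}"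
     "p \<in> Pi\<^sub>E UNIV V" "Pi\<^sub>E UNIV V \<subseteq> U"
    using assms unfolding prod_top_def openin_product_topology_alt by blast
  define W where "W = {i. V i \<noteq> UNIV}"
  have "finite W" using V(1) by (simp add: W_def)
  moreover have "cyl W p \<subseteq> U"
  proof
    fix u assume u: "u \<in> cyl W p"
    have "u \<in> Pi\<^sub>E UNIV V"
    proof (simp add: PiE_def Pi_def, intro allI)
      fix i show "u i \<in> V i"
        using u V(2) by (cases "i \<in> W") (auto simp: W_def cyl_def PiE_def Pi_def)
    qed
    thus "u \<in> U" using V(3) by blast
  qed
  ultimately show ?thesis by blast
qed

lemma shift_shift [simp]: "shift n (shift m x) = shift (m + n) x"
  by (simp add: shift_def ac_simps)

lemma shift_zero [simp]: "shift 0 x = x"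
  by (simp add: shift_def)

lemma continuous_shift: "continuous_map prod_top prod_top (shift n :: 'm::finite config \<Rightarrow> _)"
  unfolding prod_top_def shift_def
  by (auto simp: continuous_map_componentwise_UNIV intro: continuous_map_product_projection)

lemma orbit_closure_shift:
  assumes "x \<in> orbit_closure eta" shows "shift n x \<in> orbit_closure eta"
proof -
  have "shift n ` orbit_closure eta \<subseteq> prod_top closure_of (shift n ` range (\<lambda>k. shift k eta))"
    unfolding orbit_closure_def by (rule continuous_map_image_closure_subset[OF continuous_shift])
  also have "shift n ` range (\<lambda>k. shift k eta) \<subseteq> range (\<lambda>k. shift k eta)" by auto
  hence "prod_top closure_of (shift n ` range (\<lambda>k. shift k eta)) \<subseteq> orbit_closure eta"
    unfolding orbit_closure_def by (rule closure_of_mono)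
  finally show ?thesis using assms by blast
qed

lemma orbit_in_closure: "shift n eta \<in> orbit_closure eta"
  unfolding orbit_closure_def using closure_of_subset[of "range (\<lambda>k. shift k eta)" prod_top] by auto

lemma compact_closure: "compactin prod_top (orbit_closure (eta :: 'm::finite config))"
proof -
  have "compact_space (prod_top :: 'm config topology)"
    unfolding prod_top_def by (simp add: compact_space_product_topology compact_space_discrete_topology)
  thus ?thesis unfolding orbit_closure_def
    by (simp add: closedin_compact_space)
qed

lemma metrizable_prod: "metrizable_space (prod_top :: 'm::finite config topology)"
  unfolding prod_top_def metrizable_space_product_topology by simp

lemma exists_compatible: "\<exists>D. compatible_metric X (D :: 'm::finite config \<Rightarrow> _)"
proof -
  obtain M D where MD: "Metric_space M D" "subtopology (prod_top :: 'm config topology) X = Metric_space.mtopology M D"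
    using metrizable_space_subtopology[OF metrizable_prod] unfolding metrizable_space_def by metis
  have "M = X" using arg_cong[OF MD(2), of topspace] Metric_space.topspace_mtopology[OF MD(1)] by simp
  thus ?thesis using MD unfolding compatible_metric_def by metis
qed

lemma metric_cyl:
  assumes cm: "compatible_metric X D" and p: "p \<in> X" and e: "e > 0"
  shows "\<exists>W. finite W \<and> (\<forall>u\<in>X. (\<forall>g\<in>W. u g = p g) \<longrightarrow> D p u < e)"
proof -
  interpret Metric_space X D using cm by (simp add: compatible_metric_def)
  have top: "mtopology = subtopology prod_top X" using cm by (simp add: compatible_metric_def)
  have "openin (subtopology prod_top X) (mball p e)" using top by (metis openin_mball)
  then obtain U where U: "openin prod_top U" "mball p e = U \<inter> X"
    by (auto simp: openin_subtopology)
  have "p \<in> U" using U(2) p e by auto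
  then obtain W where W: "finite W" "cyl W p \<subseteq> U" using open_contains_cyl[OF U(1)] by blast
  have "\<forall>u\<in>X. (\<forall>g\<in>W. u g = p g) \<longrightarrow> D p u < e"
  proof (intro ballI impI)
    fix u assume "u \<in> X" "\<forall>g\<in>W. u g = p g"
    hence "u \<in> U \<inter> X" using W(2) by (auto simp: cyl_def)
    thus "D p u < e" using U(2) by auto
  qed
  thus ?thesis using W(1) by blast
qed

lemma metric_sep:
  assumes cm: "compatible_metric X D" and comp: "compactin prod_top X" and W: "finite W"
  shows "\<exists>e>0. \<forall>u\<in>X. \<forall>z\<in>X. D u z < e \<longrightarrow> (\<forall>g\<in>W. u g = z g)"
proof -
  interpret Metric_space X D using cm by (simp add: compatible_metric_def)
  have top: "mtopology = subtopology prod_top X" using cm by (simp add: compatible_metric_def)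
  have compX: "compactin mtopology X" unfolding top using comp by (simp add: compactin_subtopology)
  define C where "C = (\<lambda>p. cyl W p \<inter> X) ` X"
  have cov: "X \<subseteq> \<Union>C" by (auto simp: C_def cyl_def)
  have opn: "openin mtopology U" if UC: "U \<in> C" for U
  proof -
    obtain p where "U = cyl W p \<inter> X" using UC by (auto simp: C_def)
    moreover have "openin prod_top (cyl W p)" using cyl_open[OF W] .
    ultimately have "openin (subtopology prod_top X) U" by (auto simp: openin_subtopology)
    thus ?thesis using top by simp
  qed
  obtain e where e: "e > 0" "\<forall>x\<in>X. \<exists>U\<in>C. mball x e \<subseteq> U"
    using lebesgue_number[OF compX cov opn] by blast
  have "\<forall>u\<in>X. \<forall>z\<in>X. D u z < e \<longrightarrow> (\<forall>g\<in>W. u g = z g)"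
  proof (intro ballI impI)
    fix u z g assume u: "u \<in> X" and z: "z \<in> X" and d: "D u z < e" and g: "g \<in> W"
    obtain U where U: "U \<in> C" "mball u e \<subseteq> U" using e(2) u by blast
    obtain p where "U = cyl W p \<inter> X" using U(1) by (auto simp: C_def)
    moreover have "u \<in> mball u e" "z \<in> mball u e" using u z d e(1) by auto
    ultimately have "u \<in> cyl W p" "z \<in> cyl W p" using U(2) by blast+
    hence "u g = p g" "z g = p g" using g unfolding cyl_def by blast+
    thus "u g = z g" by simp
  qed
  thus ?thesis using e(1) by blast
qed

lemma coprime_lattices_sym: "coprime_lattices L L' \<Longrightarrow> coprime_lattices L' L"
proof -
  have "{x + y |x y. x \<in> L' \<and> y \<in> L} = {x + y |x y. x \<in> L \<and> y \<in> L'}"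
  proof (intro set_eqI iffI)
    fix z assume "z \<in> {x + y |x y. x \<in> L' \<and> y \<in> L}"
    then obtain x y where "z = x + y" "x \<in> L'" "y \<in> L" by blast
    hence "z = y + x" "y \<in> L" "x \<in> L'" by (simp_all add: add.commute)
    thus "z \<in> {x + y |x y. x \<in> L \<and> y \<in> L'}" by blast
  next
    fix z assume "z \<in> {x + y |x y. x \<in> L \<and> y \<in> L'}"
    then obtain x y where "z = x + y" "x \<in> L" "y \<in> L'" by blast
    hence "z = y + x" "y \<in> L'" "x \<in> L" by (simp_all add: add.commute)
    thus "z \<in> {x + y |x y. x \<in> L' \<and> y \<in> L}" by blast
  qed
  thus "coprime_lattices L L' \<Longrightarrow> coprime_lattices L' L" unfolding coprime_lattices_def by simp
qed

lemma coprime_lattices_iff: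
  "coprime_lattices (lattice_of a) (lattice_of (b::'m::finite \<Rightarrow> nat)) \<longleftrightarrow> (\<forall>j. coprime (int (a j)) (int (b j)))"
proof
  assume H: "coprime_lattices (lattice_of a) (lattice_of b)"
  show "\<forall>j. coprime (int (a j)) (int (b j))"
  proof
    fix j
    define v :: "int ^ 'm" where "v = (\<chi> k. if k = j then 1 else 0)"
    have "v \<in> {x + y | x y. x \<in> lattice_of a \<and> y \<in> lattice_of b}" using H by (simp add: coprime_lattices_def)
    then obtain x y where xy: "v = x + y" "x \<in> lattice_of a" "y \<in> lattice_of b" by blast
    have 1: "x $ j + y $ j = 1" using xy(1) by (simp add: v_def vec_eq_iff) (metis vector_add_component)
    have "int (a j) dvd x $ j" "int (b j) dvd y $ j" using xy by (auto simp: lattice_of_def)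
    show "coprime (int (a j)) (int (b j))"
    proof (rule coprimeI)
      fix c assume "c dvd int (a j)" "c dvd int (b j)"
      hence "c dvd x $ j + y $ j"
        using \<open>int (a j) dvd x $ j\<close> \<open>int (b j) dvd y $ j\<close> by (meson dvd_add dvd_trans)
      thus "is_unit c" using 1 by simp
    qed
  qed
next
  assume H: "\<forall>j. coprime (int (a j)) (int (b j))"
  have "\<forall>j. \<exists>s t. s * int (a j) + t * int (b j) = 1"
    using H bezout_int by (metis coprime_iff_gcd_eq_1)
  then obtain s t where st: "\<And>j. s j * int (a j) + t j * int (b j) = 1" by metis
  show "coprime_lattices (lattice_of a) (lattice_of b)"
    unfolding coprime_lattices_def
  proof (rule set_eqI, simp)
    fix v :: "int ^ 'm"
    define x :: "int ^ 'm" where "x = (\<chi> j. s j * int (a j) * v $ j)"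
    define y :: "int ^ 'm" where "y = (\<chi> j. t j * int (b j) * v $ j)"
    have "v = x + y"
    proof (simp add: vec_eq_iff x_def y_def, intro allI)
      fix j have "v $ j = (s j * int (a j) + t j * int (b j)) * v $ j" using st[of j] by simp
      thus "v $ j = s j * int (a j) * v $ j + t j * int (b j) * v $ j" by (simp add: algebra_simps)
    qed
    moreover have "x \<in> lattice_of a" "y \<in> lattice_of b" by (auto simp: lattice_of_def x_def y_def)
    ultimately show "\<exists>x y. v = x + y \<and> x \<in> lattice_of a \<and> y \<in> lattice_of b" by blast
  qed
qed

lemma crt_int:
  fixes m :: "'a \<Rightarrow> nat" and r :: "'a \<Rightarrow> int"
  assumes fin: "finite A" and cop: "\<forall>i\<in>A. \<forall>j\<in>A. i \<noteq> j \<longrightarrow> coprime (m i) (m j)"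
    and pos: "\<forall>i\<in>A. m i \<ge> 1"
  shows "\<exists>x::int. \<forall>i\<in>A. int (m i) dvd (x - r i)"
proof -
  obtain x where x: "\<forall>i\<in>A. [x = nat (r i mod int (m i))] (mod m i)"
    using chinese_remainder_nat[OF fin cop, of "\<lambda>i. nat (r i mod int (m i))"] by blast
  have "int (m i) dvd (int x - r i)" if i: "i \<in> A" for i
  proof -
    have mp: "int (m i) > 0" using pos i by auto
    have "[x = nat (r i mod int (m i))] (mod m i)" using x i by blast
    hence c1: "[int x = int (nat (r i mod int (m i)))] (mod int (m i))"
      unfolding cong_int_iff .
    have e: "int (nat (r i mod int (m i))) = r i mod int (m i)" using mp by simp
    have "[int x = r i mod int (m i)] (mod int (m i))" using c1 unfolding e .
    hence "[int x = r i] (mod int (m i))" by (metis cong_def mod_mod_trivial)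
    thus ?thesis by (metis cong_iff_dvd_diff)
  qed
  thus ?thesis by blast
qed

lemma lattice_add: "g \<in> lattice_of b \<Longrightarrow> h \<in> lattice_of b \<Longrightarrow> g + h \<in> lattice_of b"
  by (auto simp: lattice_of_def)

definition box :: "('m::finite \<Rightarrow> int) \<Rightarrow> (int ^ 'm) set" where
  "box N = vec_lambda ` (Pi\<^sub>E UNIV (\<lambda>j. {0..<N j}))"

lemma finite_box: "finite (box N)"
  unfolding box_def by (intro finite_imageI finite_PiE) auto

lemma in_box: "(\<And>j. 0 \<le> f j \<and> f j < N j) \<Longrightarrow> (\<chi> j. f j) \<in> box N"
  unfolding box_def by (intro imageI) (auto simp: PiE_def Pi_def)

lemma coset:
  fixes b :: "'m::finite \<Rightarrow> nat"
  assumes x: "x \<in> orbit_closure eta" and zero: "\<And>h. h \<in> lattice_of b \<Longrightarrow> \<not> eta h"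
    and pos: "\<And>j. b j \<ge> 1"
  shows "\<exists>c. \<forall>g\<in>lattice_of b. \<not> x (g + c)"
proof (rule ccontr)
  assume nc: "\<not> ?thesis"
  have H: "\<forall>c. \<exists>h. h - c \<in> lattice_of b \<and> x h"
  proof
    fix c
    obtain g where "g \<in> lattice_of b" "x (g + c)" using nc by blast
    thus "\<exists>h. h - c \<in> lattice_of b \<and> x h" by (intro exI[of _ "g + c"]) simp
  qed
  define Q where "Q = box (\<lambda>j. int (b j))"
  define H where "H = (\<lambda>c. SOME h. h - c \<in> lattice_of b \<and> x h) ` Q"
  have Hc: "(SOME h. h - c \<in> lattice_of b \<and> x h) - c \<in> lattice_of b \<and> x (SOME h. h - c \<in> lattice_of b \<and> x h)" for c
    using someI_ex[OF H[rule_format, of c]] .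
  have "finite H" unfolding H_def Q_def using finite_box by blast
  hence "openin prod_top (cyl H x)" by (rule cyl_open)
  moreover have "x \<in> cyl H x" by (simp add: cyl_def)
  ultimately obtain t where t: "shift t eta \<in> cyl H x"
    using x unfolding orbit_closure_def in_closure_of by blast
  define c where "c = (\<chi> j. (- t $ j) mod int (b j))"
  have cQ: "c \<in> Q" unfolding Q_def c_def by (rule in_box) (use pos in \<open>auto simp: less_eq_Suc_le\<close>)
  define h where "h = (SOME h. h - c \<in> lattice_of b \<and> x h)"
  have hH: "h \<in> H" unfolding H_def h_def using cQ by blast
  have h1: "h - c \<in> lattice_of b" "x h" using Hc[of c] unfolding h_def by auto
  have "c + t \<in> lattice_of b"
    unfolding lattice_of_def c_def
  proof (simp, intro allI)
    fix j show "int (b j) dvd (- t $ j) mod int (b j) + t $ j"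
    proof -
      have "((- t $ j) mod int (b j) + t $ j) mod int (b j) = ((- t $ j) + t $ j) mod int (b j)"
        by (rule mod_add_left_eq)
      thus ?thesis by (simp add: dvd_eq_mod_eq_0)
    qed
  qed
  hence "(h - c) + (c + t) \<in> lattice_of b" using lattice_add[OF h1(1)] by blast
  hence "\<not> eta (h + t)" using zero by (simp add: algebra_simps)
  moreover have "shift t eta h = x h" using t hH unfolding cyl_def by blast
  ultimately show False using h1(2) by (simp add: shift_def)
qed

lemma vanish:
  fixes a :: "nat \<Rightarrow> 'm::finite \<Rightarrow> nat"
  assumes pos: "\<And>i j. a i j \<ge> 1"
    and zero: "\<forall>i h. h \<in> lattice_of (a i) \<longrightarrow> \<not> eta h"
    and S: "S \<subseteq> range (\<lambda>i. lattice_of (a i))" "infinite S"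
       "\<forall>L\<in>S. \<forall>L'\<in>S. L \<noteq> L' \<longrightarrow> coprime_lattices L L'"
    and x: "x \<in> orbit_closure eta" and y: "y \<in> orbit_closure eta"
    and W: "finite W" and F: "finite F"
  shows "\<exists>n. n \<notin> F \<and> (\<forall>w\<in>W. \<not> x (w + n) \<and> \<not> y (w + n))"
proof -
  define K where "K = W \<times> (UNIV :: bool set)"
  have finK: "finite K" unfolding K_def using W by simp
  obtain T where T: "finite T" "card T = card K" "T \<subseteq> S"
    using infinite_arbitrarily_large[OF S(2)] by blast
  obtain hb where hb: "bij_betw hb K T" using finite_same_card_bij[OF finK T(1) T(2)[symmetric]] by blast
  define idx where "idx = (\<lambda>\<kappa>. SOME i. hb \<kappa> = lattice_of (a i))"
  have idx: "hb \<kappa> = lattice_of (a (idx \<kappa>))" if "\<kappa> \<in> K" for \<kappa>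
  proof -
    have "hb \<kappa> \<in> range (\<lambda>i. lattice_of (a i))" using that hb T(3) S(1) bij_betwE by blast
    then obtain i where "hb \<kappa> = lattice_of (a i)" by blast
    thus ?thesis unfolding idx_def by (rule someI)
  qed
  define z where "z = (\<lambda>\<kappa>::(int^'m) \<times> bool. if snd \<kappa> then x else y)"
  have zX: "z \<kappa> \<in> orbit_closure eta" for \<kappa> using x y by (simp add: z_def)
  define cc where "cc = (\<lambda>\<kappa>. SOME c. \<forall>g\<in>lattice_of (a (idx \<kappa>)). \<not> z \<kappa> (g + c))"
  have cc: "\<forall>g\<in>lattice_of (a (idx \<kappa>)). \<not> z \<kappa> (g + cc \<kappa>)" for \<kappa>
  proof -
    have "\<exists>c. \<forall>g\<in>lattice_of (a (idx \<kappa>)). \<not> z \<kappa> (g + c)"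
      by (rule coset[OF zX _ pos]) (use zero in blast)
    thus ?thesis unfolding cc_def by (rule someI_ex)
  qed
  have cop: "coprime (a (idx \<kappa>) j) (a (idx \<kappa>') j)" if "\<kappa> \<in> K" "\<kappa>' \<in> K" "\<kappa> \<noteq> \<kappa>'" for \<kappa> \<kappa>' j
  proof -
    have "hb \<kappa> \<noteq> hb \<kappa>'" using hb that unfolding bij_betw_def inj_on_def by blast
    moreover have "hb \<kappa> \<in> S" "hb \<kappa>' \<in> S" using that hb T(3) bij_betwE by blast+
    ultimately have "coprime_lattices (hb \<kappa>) (hb \<kappa>')" using S(3) by blast
    hence "coprime_lattices (lattice_of (a (idx \<kappa>))) (lattice_of (a (idx \<kappa>')))"
      using idx that by simp
    hence "coprime (int (a (idx \<kappa>) j)) (int (a (idx \<kappa>') j))"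
      unfolding coprime_lattices_iff by blast
    thus ?thesis by simp
  qed
  have "\<forall>j. \<exists>x0::int. \<forall>\<kappa>\<in>K. int (a (idx \<kappa>) j) dvd (x0 - ((cc \<kappa>) $ j - (fst \<kappa>) $ j))"
  proof
    fix j
    show "\<exists>x0::int. \<forall>\<kappa>\<in>K. int (a (idx \<kappa>) j) dvd (x0 - ((cc \<kappa>) $ j - (fst \<kappa>) $ j))"
      by (rule crt_int[OF finK]) (use cop pos in auto)
  qed
  then obtain X0 where X0: "\<And>j \<kappa>. \<kappa> \<in> K \<Longrightarrow> int (a (idx \<kappa>) j) dvd (X0 j - ((cc \<kappa>) $ j - (fst \<kappa>) $ j))"
    by metis
  define P where "P = (\<lambda>j. \<Prod>\<kappa>\<in>K. int (a (idx \<kappa>) j))"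
  have Ppos: "P j \<ge> 1" for j unfolding P_def
    by (rule prod_ge_1) (use pos in auto)
  have Pdvd: "int (a (idx \<kappa>) j) dvd P j" if "\<kappa> \<in> K" for \<kappa> j
    unfolding P_def using finK that by (rule dvd_prodI)
  define nk where "nk = (\<lambda>k::nat. (\<chi> j. X0 j + int k * P j))"
  have "inj nk"
  proof (rule injI)
    fix k1 k2 assume "nk k1 = nk k2"
    hence "nk k1 $ undefined = nk k2 $ undefined" by simp
    hence "int k1 * P undefined = int k2 * P undefined" by (simp add: nk_def)
    thus "k1 = k2" using Ppos[of undefined] by simp
  qed
  hence "infinite (range nk)" by (rule range_inj_infinite)
  then obtain k where k: "nk k \<notin> F" using F by (metis finite_subset subsetI rangeE)
  have "\<not> z (w, b) (w + nk k)" if w: "w \<in> W" for w b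
  proof -
    have kk: "(w, b) \<in> K" using w by (simp add: K_def)
    have "w + nk k - cc (w, b) \<in> lattice_of (a (idx (w, b)))"
      unfolding lattice_of_def
    proof (simp, intro allI)
      fix j
      have d1: "int (a (idx (w, b)) j) dvd (X0 j - ((cc (w, b)) $ j - w $ j))" using X0[OF kk] by simp
      have d2: "int (a (idx (w, b)) j) dvd int k * P j" using Pdvd[OF kk] by simp
      have eq: "w $ j + nk k $ j - cc (w, b) $ j = (X0 j - ((cc (w, b)) $ j - w $ j)) + int k * P j"
        by (simp add: nk_def algebra_simps)
      show "int (a (idx (w, b)) j) dvd w $ j + nk k $ j - cc (w, b) $ j"
        unfolding eq using d1 d2 by (rule dvd_add)
    qed
    hence "\<not> z (w, b) ((w + nk k - cc (w, b)) + cc (w, b))" using cc by blast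
    thus ?thesis by simp
  qed
  hence "\<forall>w\<in>W. \<not> x (w + nk k) \<and> \<not> y (w + nk k)"
    by (metis (full_types) z_def snd_conv)
  thus ?thesis using k by blast
qed

lemma zero_in:
  fixes a :: "nat \<Rightarrow> 'm::finite \<Rightarrow> nat" and eta :: "'m config"
  assumes pos: "\<And>i j. a i j \<ge> 1"
    and zer: "\<forall>i h. h \<in> lattice_of (a i) \<longrightarrow> \<not> eta h"
    and S: "S \<subseteq> range (\<lambda>i. lattice_of (a i))" "infinite S"
       "\<forall>L\<in>S. \<forall>L'\<in>S. L \<noteq> L' \<longrightarrow> coprime_lattices L L'"
  shows "(\<lambda>_. False) \<in> orbit_closure eta"
  unfolding orbit_closure_def in_closure_of
proof (intro conjI allI impI)
  show "(\<lambda>_. False) \<in> topspace prod_top" by simp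
  fix T :: "'m config set" assume T: "(\<lambda>_. False) \<in> T \<and> openin prod_top T"
  then obtain W :: "(int^'m) set" where W: "finite W" "cyl W (\<lambda>_. False) \<subseteq> T" using open_contains_cyl by blast
  have e: "eta \<in> orbit_closure eta" using orbit_in_closure[of 0 eta] by simp
  obtain n where n: "\<forall>w\<in>W. \<not> eta (w + n) \<and> \<not> eta (w + n)"
    using vanish[OF pos zer S e e W(1) finite.emptyI] by blast
  have "shift n eta \<in> cyl W (\<lambda>_. False)" using n by (simp add: cyl_def shift_def)
  thus "\<exists>y. y \<in> range (\<lambda>n. shift n eta) \<and> y \<in> T" using W(2) by blast
qed

lemma proximal_if:
  fixes a :: "nat \<Rightarrow> 'm::finite \<Rightarrow> nat" and eta :: "'m config"
  assumes pos: "\<And>i j. a i j \<ge> 1"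
    and zer: "\<forall>i h. h \<in> lattice_of (a i) \<longrightarrow> \<not> eta h"
    and S: "S \<subseteq> range (\<lambda>i. lattice_of (a i))" "infinite S"
       "\<forall>L\<in>S. \<forall>L'\<in>S. L \<noteq> L' \<longrightarrow> coprime_lattices L L'"
  shows "proximal (orbit_closure eta)"
proof -
  define X where "X = orbit_closure eta"
  obtain D where cm: "compatible_metric X D" using exists_compatible by blast
  interpret Metric_space X D using cm by (simp add: compatible_metric_def)
  have z0: "(\<lambda>_. False) \<in> X" unfolding X_def by (rule zero_in[OF pos zer S])
  have "Liminf cofinite (\<lambda>n. ereal (D (shift n x) (shift n y))) = 0" if x: "x \<in> X" and y: "y \<in> X" for x y
  proof -
    define f where "f = (\<lambda>n. ereal (D (shift n x) (shift n y)))"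
    have sX: "shift n x \<in> X" "shift n y \<in> X" for n
      using x y orbit_closure_shift unfolding X_def by blast+
    have ge: "0 \<le> Liminf cofinite f"
    proof (rule Liminf_bounded, rule always_eventually, rule allI)
      fix n show "0 \<le> f n" unfolding f_def using nonneg by simp
    qed
    have le: "Liminf cofinite f \<le> 0"
    proof (rule ereal_le_epsilon2)
      fix e :: real assume e: "0 < e"
      show "Liminf cofinite f \<le> 0 + ereal e"
      proof (rule ccontr)
        assume nt: "\<not> ?thesis"
        have lt: "ereal e < Liminf cofinite f" using nt by (metis add.left_neutral not_le)
        have H: "\<forall>y<Liminf cofinite f. eventually (\<lambda>n. y < f n) cofinite"
          by (rule le_Liminf_iff[THEN iffD1, OF order_refl])
        have "eventually (\<lambda>n. ereal e < f n) cofinite" using H lt by (elim allE[of _ "ereal e"] impE)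
        hence finF: "finite {n. \<not> ereal e < f n}" unfolding eventually_cofinite .
        obtain W where W: "finite W" "\<forall>u\<in>X. (\<forall>g\<in>W. u g = False) \<longrightarrow> D (\<lambda>_. False) u < e / 2"
          using metric_cyl[OF cm z0, of "e/2"] e by (metis half_gt_zero)
        obtain n where n: "n \<notin> {n. \<not> ereal e < f n}" "\<forall>w\<in>W. \<not> x (w + n) \<and> \<not> y (w + n)"
          using vanish[where a=a and eta=eta, OF pos zer S x[unfolded X_def] y[unfolded X_def] W(1) finF] by blast
        have "\<forall>g\<in>W. shift n x g = False" "\<forall>g\<in>W. shift n y g = False"
          using n(2) by (simp_all add: shift_def)
        hence "D (\<lambda>_. False) (shift n x) < e / 2" "D (\<lambda>_. False) (shift n y) < e / 2"
          using W(2) sX by blast+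
        moreover have "D (shift n x) (shift n y) \<le> D (shift n x) (\<lambda>_. False) + D (\<lambda>_. False) (shift n y)"
          by (rule triangle[OF sX(1) z0 sX(2)])
        moreover have "D (shift n x) (\<lambda>_. False) = D (\<lambda>_. False) (shift n x)" by (rule commute)
        ultimately have "D (shift n x) (shift n y) < e" by linarith
        moreover have "ereal e < f n" using n(1) by simp
        ultimately show False by (simp add: f_def)
      qed
    qed
    show ?thesis using antisym[OF le ge] unfolding f_def .
  qed
  thus ?thesis unfolding proximal_def X_def[symmetric] using cm by blast
qed

lemma maximal_family:
  assumes no: "\<not> (\<exists>S. S \<subseteq> R \<and> infinite S \<and> (\<forall>L\<in>S. \<forall>L'\<in>S. L \<noteq> L' \<longrightarrow> coprime_lattices L L'))"
  shows "\<exists>F. F \<subseteq> R \<and> finite F \<and> (\<forall>L\<in>R. L \<notin> F \<longrightarrow> (\<exists>L'\<in>F. \<not> coprime_lattices L L'))"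
proof (rule ccontr)
  assume nt: "\<not> ?thesis"
  have H: "\<exists>L. L \<in> R \<and> L \<notin> F \<and> (\<forall>L'\<in>F. coprime_lattices L L')" if FF: "F \<subseteq> R" "finite F" for F
  proof (rule ccontr)
    assume "\<not> (\<exists>L. L \<in> R \<and> L \<notin> F \<and> (\<forall>L'\<in>F. coprime_lattices L L'))"
    hence "\<forall>L\<in>R. L \<notin> F \<longrightarrow> (\<exists>L'\<in>F. \<not> coprime_lattices L L')" by auto
    hence "\<exists>F. F \<subseteq> R \<and> finite F \<and> (\<forall>L\<in>R. L \<notin> F \<longrightarrow> (\<exists>L'\<in>F. \<not> coprime_lattices L L'))"
      using FF by (intro exI[of _ F] conjI)
    thus False using nt by (rule notE[rotated])
  qed
  define nxt where "nxt = (\<lambda>F. SOME L. L \<in> R \<and> L \<notin> F \<and> (\<forall>L'\<in>F. coprime_lattices L L'))"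
  have nxt: "nxt F \<in> R \<and> nxt F \<notin> F \<and> (\<forall>L'\<in>F. coprime_lattices (nxt F) L')" if "F \<subseteq> R" "finite F" for F
    unfolding nxt_def using someI_ex[OF H[OF that]] .
  define Fs where "Fs = (\<lambda>k. ((\<lambda>F. insert (nxt F) F) ^^ k) {})"
  have Fs_Suc: "Fs (Suc k) = insert (nxt (Fs k)) (Fs k)" for k by (simp add: Fs_def)
  have P: "Fs k \<subseteq> R \<and> finite (Fs k) \<and> card (Fs k) = k \<and>
      (\<forall>L\<in>Fs k. \<forall>L'\<in>Fs k. L \<noteq> L' \<longrightarrow> coprime_lattices L L')" for k
  proof (induction k)
    case 0 show ?case by (simp add: Fs_def)
  next
    case (Suc k)
    have n: "nxt (Fs k) \<in> R" "nxt (Fs k) \<notin> Fs k" "\<forall>L'\<in>Fs k. coprime_lattices (nxt (Fs k)) L'"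
      using nxt[of "Fs k"] Suc.IH by auto
    have pw: "\<forall>L\<in>Fs (Suc k). \<forall>L'\<in>Fs (Suc k). L \<noteq> L' \<longrightarrow> coprime_lattices L L'"
      unfolding Fs_Suc
    proof (intro ballI impI)
      fix L L' assume L: "L \<in> insert (nxt (Fs k)) (Fs k)" and L': "L' \<in> insert (nxt (Fs k)) (Fs k)"
        and ne: "L \<noteq> L'"
      show "coprime_lattices L L'"
      proof (cases "L = nxt (Fs k)")
        case True
        hence "L' \<in> Fs k" using L' ne by blast
        thus ?thesis using n(3) True by blast
      next
        case False
        hence Lk: "L \<in> Fs k" using L by blast
        show ?thesis
        proof (cases "L' = nxt (Fs k)")
          case True
          thus ?thesis using n(3) Lk coprime_lattices_sym by metis
        next
          case False
          hence "L' \<in> Fs k" using L' by blast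
          thus ?thesis using Suc.IH Lk ne by blast
        qed
      qed
    qed
    have "card (Fs (Suc k)) = Suc k" unfolding Fs_Suc using Suc.IH n(2) by simp
    thus ?case using pw Suc.IH n(1) unfolding Fs_Suc by simp
  qed
  have mono: "Fs k \<subseteq> Fs (k + d)" for k d
    by (induction d) (auto simp: Fs_Suc)
  define S where "S = (\<Union>k. Fs k)"
  have "S \<subseteq> R" using P unfolding S_def by blast
  moreover have "infinite S"
  proof
    assume fin: "finite S"
    have "card (Fs (Suc (card S))) \<le> card S" using fin by (intro card_mono) (auto simp: S_def)
    moreover have "card (Fs (Suc (card S))) = Suc (card S)" using P[of "Suc (card S)"] by (elim conjE)
    ultimately show False by linarith
  qed
  moreover have "\<forall>L\<in>S. \<forall>L'\<in>S. L \<noteq> L' \<longrightarrow> coprime_lattices L L'"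
  proof (intro ballI impI)
    fix L L' assume "L \<in> S" "L' \<in> S" "L \<noteq> L'"
    then obtain k1 k2 where "L \<in> Fs k1" "L' \<in> Fs k2" by (auto simp: S_def)
    hence "L \<in> Fs (k1 + k2)" "L' \<in> Fs (k1 + k2)" using mono[of k1 k2] mono[of k2 k1] by (auto simp: add.commute)
    thus "coprime_lattices L L'" using P[of "k1 + k2"] \<open>L \<noteq> L'\<close> by blast
  qed
  ultimately have "S \<subseteq> R \<and> infinite S \<and> (\<forall>L\<in>S. \<forall>L'\<in>S. L \<noteq> L' \<longrightarrow> coprime_lattices L L')"
    by (intro conjI)
  hence "\<exists>S. S \<subseteq> R \<and> infinite S \<and> (\<forall>L\<in>S. \<forall>L'\<in>S. L \<noteq> L' \<longrightarrow> coprime_lattices L L')"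
    by (rule exI)
  thus False using no by (rule notE[rotated])
qed

lemma not_proximal:
  fixes a :: "nat \<Rightarrow> 'm::finite \<Rightarrow> nat" and eta :: "'m config"
  assumes pos: "\<And>i j. a i j \<ge> 1" and nontriv: "\<And>i. a i \<noteq> (\<lambda>_. 1)"
    and eta_def: "eta = (\<lambda>g. g \<notin> (\<Union>i. lattice_of (a i)))"
    and F: "F \<subseteq> range (\<lambda>i. lattice_of (a i))" "finite F"
        "\<forall>L\<in>range (\<lambda>i. lattice_of (a i)). L \<notin> F \<longrightarrow> (\<exists>L'\<in>F. \<not> coprime_lattices L L')"
  shows "\<not> proximal (orbit_closure eta)"
proof
  assume prox: "proximal (orbit_closure eta)"
  define X where "X = orbit_closure eta"
  obtain D where cm: "compatible_metric X D"
    and lim: "\<forall>x\<in>X. \<forall>y\<in>X. Liminf cofinite (\<lambda>n. ereal (D (shift n x) (shift n y))) = 0"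
    using prox unfolding proximal_def X_def[symmetric] by (elim exE conjE)
  define idx where "idx = (\<lambda>L. SOME i. L = lattice_of (a i))"
  have idx: "L = lattice_of (a (idx L))" if LF: "L \<in> F" for L
  proof -
    obtain i where "L = lattice_of (a i)" using F(1) LF by blast
    thus ?thesis unfolding idx_def by (rule someI)
  qed
  define I where "I = idx ` F"
  have finI: "finite I" using F(2) by (simp add: I_def)
  have self_nc: "\<not> coprime_lattices (lattice_of (a i)) (lattice_of (a i))" for i
  proof
    assume "coprime_lattices (lattice_of (a i)) (lattice_of (a i))"
    hence c: "\<forall>j. coprime (int (a i j)) (int (a i j))" unfolding coprime_lattices_iff .
    obtain j where j: "a i j \<noteq> 1" using nontriv[of i] by (auto simp: fun_eq_iff)
    have "coprime (a i j) (a i j)" using c by simp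
    hence "a i j = 1" by simp
    with j show False by contradiction
  qed
  have C: "\<exists>i\<in>I. \<not> coprime_lattices (lattice_of (a i')) (lattice_of (a i))" for i'
  proof (cases "lattice_of (a i') \<in> F")
    case True
    hence "idx (lattice_of (a i')) \<in> I" by (simp add: I_def)
    moreover have "lattice_of (a (idx (lattice_of (a i')))) = lattice_of (a i')" using idx[OF True] by simp
    ultimately show ?thesis using self_nc[of i'] by metis
  next
    case False
    then obtain L' where L': "L' \<in> F" "\<not> coprime_lattices (lattice_of (a i')) L'" using F(3) by blast
    have "idx L' \<in> I" using L'(1) by (simp add: I_def)
    moreover have "\<not> coprime_lattices (lattice_of (a i')) (lattice_of (a (idx L')))" using L'(2) idx[OF L'(1)] by simp
    ultimately show ?thesis by blast
  qed
  define M where "M = (\<lambda>j. \<Prod>i\<in>I. int (a i j))"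
  have Mpos: "M j \<ge> 1" for j unfolding M_def by (rule prod_ge_1) (use pos in auto)
  have one: "eta g" if g: "\<forall>j. M j dvd g $ j - 1" for g
  proof -
    have "g \<notin> lattice_of (a i')" for i'
    proof
      assume gi: "g \<in> lattice_of (a i')"
      obtain i where i: "i \<in> I" "\<not> coprime_lattices (lattice_of (a i')) (lattice_of (a i))" using C by blast
      then obtain j where j: "\<not> coprime (int (a i' j)) (int (a i j))" unfolding coprime_lattices_iff by blast
      have cg: "coprime (g $ j) (M j)"
      proof (rule coprimeI)
        fix c assume "c dvd g $ j" "c dvd M j"
        hence "c dvd g $ j - (g $ j - 1)" using g by (meson dvd_diff dvd_trans)
        thus "is_unit c" by simp
      qed
      have d1: "int (a i' j) dvd g $ j" using gi by (simp add: lattice_of_def)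
      have d2: "int (a i j) dvd M j" unfolding M_def using finI i(1) by (rule dvd_prodI)
      have "coprime (int (a i' j)) (int (a i j))" using coprime_divisors[OF d1 d2 cg] .
      with j show False by contradiction
    qed
    thus ?thesis unfolding eta_def by blast
  qed
  define N where "N = (\<lambda>j. M j * int (a 0 j))"
  have Npos: "N j > 0" for j unfolding N_def using Mpos[of j] pos[of 0 j] by simp
  define W where "W = box N"
  obtain e where e: "e > 0" "\<forall>u\<in>X. \<forall>z\<in>X. D u z < e \<longrightarrow> (\<forall>g\<in>W. u g = z g)"
    using metric_sep[OF cm compact_closure[of eta, folded X_def] finite_box[of N]] unfolding W_def by blast
  define v :: "int ^ 'm" where "v = (\<chi> j. -1)"
  define y0 where "y0 = shift v eta"
  have x0X: "eta \<in> X" unfolding X_def using orbit_in_closure[of 0 eta] by simp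
  have y0X: "y0 \<in> X" unfolding X_def y0_def by (rule orbit_in_closure)
  have sX: "shift n eta \<in> X" "shift n y0 \<in> X" for n
    using x0X y0X orbit_closure_shift unfolding X_def by blast+
  have diff: "\<exists>w\<in>W. shift n eta w \<noteq> shift n y0 w" for n
  proof -
    define w :: "int ^ 'm" where "w = (\<chi> j. (1 - n $ j) mod N j)"
    have wW: "w \<in> W" unfolding W_def w_def
      by (rule in_box) (use Npos in \<open>simp add: pos_mod_sign pos_mod_bound\<close>)
    have d: "N j dvd (w + n) $ j - 1" for j
    proof -
      have "N j dvd (1 - n $ j) - (1 - n $ j) mod N j" by (rule dvd_minus_mod)
      hence "N j dvd - ((1 - n $ j) - (1 - n $ j) mod N j)" by (simp only: dvd_minus_iff)
      moreover have eq: "(w + n) $ j - 1 = - ((1 - n $ j) - (1 - n $ j) mod N j)"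
        by (simp add: w_def algebra_simps)
      ultimately show ?thesis by (simp only: eq)
    qed
    have "eta (w + n)"
    proof (rule one, rule allI)
      fix j have "M j dvd N j" unfolding N_def by simp
      thus "M j dvd (w + n) $ j - 1" using d[of j] by (rule dvd_trans)
    qed
    moreover have "w + (v + n) \<in> lattice_of (a 0)" unfolding lattice_of_def
    proof (simp, intro allI)
      fix j have "int (a 0 j) dvd N j" unfolding N_def by simp
      hence "int (a 0 j) dvd (w + n) $ j - 1" using d[of j] by (rule dvd_trans)
      moreover have eq2: "w $ j + (v $ j + n $ j) = (w + n) $ j - 1" by (simp add: v_def)
      ultimately show "int (a 0 j) dvd w $ j + (v $ j + n $ j)" by (simp only: eq2)
    qed
    hence "\<not> eta (w + (v + n))" unfolding eta_def by blast
    moreover have "shift n eta w = eta (w + n)" by (simp add: shift_def)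
    moreover have "shift n y0 w = eta (w + (v + n))" by (simp add: y0_def shift_def ac_simps)
    ultimately show ?thesis using wW by metis
  qed
  have ge: "ereal e \<le> Liminf cofinite (\<lambda>n. ereal (D (shift n eta) (shift n y0)))"
  proof (rule Liminf_bounded, rule always_eventually, rule allI)
    fix n
    have "\<not> D (shift n eta) (shift n y0) < e"
    proof
      assume "D (shift n eta) (shift n y0) < e"
      hence "\<forall>g\<in>W. shift n eta g = shift n y0 g" using e(2) sX by blast
      thus False using diff[of n] by blast
    qed
    thus "ereal e \<le> ereal (D (shift n eta) (shift n y0))" by simp
  qed
  moreover have "Liminf cofinite (\<lambda>n. ereal (D (shift n eta) (shift n y0))) = 0"
    using lim x0X y0X by blast
  ultimately show False using e(1) by simp
qed

theorem corollary1p3: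
  fixes a :: "nat \<Rightarrow> 'm::finite \<Rightarrow> nat"
    and eta :: "'m config"
  assumes pos: "\<And>i j. a i j \<ge> 1"
    and nontriv: "\<And>i. a i \<noteq> (\<lambda>_. 1)"
    and eta_def: "eta = (\<lambda>g. g \<notin> (\<Union>i. lattice_of (a i)))"
  shows "proximal (orbit_closure eta) \<longleftrightarrow>
    (\<exists>S. S \<subseteq> range (\<lambda>i. lattice_of (a i)) \<and> infinite S \<and>
         (\<forall>L\<in>S. \<forall>L'\<in>S. L \<noteq> L' \<longrightarrow> coprime_lattices L L'))"
proof
  assume prox: "proximal (orbit_closure eta)"
  show "\<exists>S. S \<subseteq> range (\<lambda>i. lattice_of (a i)) \<and> infinite S \<and>
         (\<forall>L\<in>S. \<forall>L'\<in>S. L \<noteq> L' \<longrightarrow> coprime_lattices L L')"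
  proof (rule ccontr)
    assume no: "\<not> (\<exists>S. S \<subseteq> range (\<lambda>i. lattice_of (a i)) \<and> infinite S \<and>
         (\<forall>L\<in>S. \<forall>L'\<in>S. L \<noteq> L' \<longrightarrow> coprime_lattices L L'))"
    obtain F where F: "F \<subseteq> range (\<lambda>i. lattice_of (a i))" "finite F"
        "\<forall>L\<in>range (\<lambda>i. lattice_of (a i)). L \<notin> F \<longrightarrow> (\<exists>L'\<in>F. \<not> coprime_lattices L L')"
      using maximal_family[OF no] by (elim exE conjE)
    show False using not_proximal[OF pos nontriv eta_def F] prox by contradiction
  qed
next
  assume "\<exists>S. S \<subseteq> range (\<lambda>i. lattice_of (a i)) \<and> infinite S \<and>
         (\<forall>L\<in>S. \<forall>L'\<in>S. L \<noteq> L' \<longrightarrow> coprime_lattices L L')"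
  then obtain S where S: "S \<subseteq> range (\<lambda>i. lattice_of (a i))" "infinite S"
         "\<forall>L\<in>S. \<forall>L'\<in>S. L \<noteq> L' \<longrightarrow> coprime_lattices L L'" by (elim exE conjE)
  have zer: "\<forall>i h. h \<in> lattice_of (a i) \<longrightarrow> \<not> eta h" unfolding eta_def by blast
  show "proximal (orbit_closure eta)" by (rule proximal_if[OF pos zer S])
qed

end
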